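(* Let $\lambda_1,\lambda_2$ be as in the context, $K\in(-1,1)$ with $K\neq0$, let $b$ solve $b'(v)=\sqrt{\lambda_1^2-K(\lambda_1^2\cos^2 b(v)+\lambda_2^2\sin^2 b(v))}$, $b(0)=0$, and let $W>0$ be the unique positive real number with $b(W)=\pi$. Let $x_3$ be the solution of $x_3'(v)=\dfrac{\lambda_1\lambda_2K}{\lambda_1+b'(v)}$ with $x_3(0)=0$. Then: (1) $x_3$ is a well-defined bijection from $\mathbb{R}$ to $\mathbb{R}$; (2) $x_3$ is odd; (3) $x_3(v+W)=x_3(v)+x_3(W)$ for all $v\in\mathbb{R}$.
   Context: Either $\lambda_1>\lambda_2>0$ or $\lambda_1=\lambda_2=1$. (The solution $b$ exists on $\mathbb{R}$ and is an increasing bijection of $\mathbb{R}$, so $W$ is well defined.) *)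

theory Defs
  imports "HOL-Analysis.Analysis"
begin

end

theory Submission imports Defs begin

lemma bij_of_deriv_ge:
  fixes f f' :: "real \<Rightarrow> real" and d :: real
  assumes df: "\<And>v. (f has_real_derivative f' v) (at v)" and d: "d > 0" and ge: "\<And>v. f' v \<ge> d"
  shows "bij f"
proof (rule bijI)
  have mono: "f x < f y" if "x < y" for x y
    using DERIV_pos_imp_increasing[OF that] df ge d by (meson less_le_trans)
  show "inj f"
    by (metis injI linorder_neqE_linordered_idom mono order_less_irrefl)
  have cont: "isCont f x" for x using df DERIV_isCont by blast
  have low: "f x - d * x \<le> f y - d * y" if "x \<le> y" for x y
  proof -
    have "\<exists>y. ((\<lambda>v. f v - d * v) has_real_derivative y) (at z) \<and> 0 \<le> y" for z
    proof -
      show "\<exists>y. ((\<lambda>v. f v - d * v) has_real_derivative y) (at z) \<and> 0 \<le> y"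
        using ge[of z] by (intro exI[of _ "f' z - d"]) (auto intro!: derivative_eq_intros df)
    qed
    from DERIV_nonneg_imp_nondecreasing[OF that this] show ?thesis by simp
  qed
  show "surj f"
  proof (rule surjI[of _ "\<lambda>t. SOME x. f x = t"], rule someI_ex)
    fix t
    define R where "R = \<bar>t - f 0\<bar> / d"
    have R: "R \<ge> 0" "d * R = \<bar>t - f 0\<bar>" using d by (auto simp: R_def)
    have "f (-R) \<le> t" using low[of "-R" 0] R by auto
    moreover have "t \<le> f R" using low[of 0 R] R by auto
    ultimately obtain x where "f x = t" using IVT[of f "-R" t R] cont R by force
    then show "\<exists>x. f x = t" by blast
  qed
qed


lemma const_of_deriv0:
  fixes f :: "real \<Rightarrow> real"
  assumes "\<And>v. (f has_real_derivative 0) (at v)"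
  shows "f x = f y"
  using DERIV_isconst_all assms by blast

theorem proposition4p3:
  fixes l1 l2 K W :: real and b x3 :: "real \<Rightarrow> real"
  assumes lam: "(l1 > l2 \<and> l2 > 0) \<or> (l1 = 1 \<and> l2 = 1)"
    and K: "-1 < K" "K < 1" "K \<noteq> 0"
    and b_ode: "\<And>v. (b has_real_derivative
        sqrt (l1^2 - K * (l1^2 * (cos (b v))^2 + l2^2 * (sin (b v))^2))) (at v)"
    and b0: "b 0 = 0"
    and W: "W > 0" "b W = pi"
    and x3_ode: "\<And>v. (x3 has_real_derivative
        (l1 * l2 * K) / (l1 + sqrt (l1^2 - K * (l1^2 * (cos (b v))^2 + l2^2 * (sin (b v))^2)))) (at v)"
    and x30: "x3 0 = 0"
  shows "bij x3 \<and> (\<forall>v. x3 (-v) = - x3 v) \<and> (\<forall>v. x3 (v + W) = x3 v + x3 W)"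
proof -
  define A where "A y = l1^2 * (cos y)^2 + l2^2 * (sin y)^2" for y
  define F where "F y = sqrt (l1^2 - K * A y)" for y
  have l: "0 < l2" "l2 \<le> l1" using lam by auto
  have l2sq: "l2^2 \<le> l1^2" using l by (simp add: power_mono)
  have A0: "0 \<le> A y" for y by (simp add: A_def)
  have A1: "A y \<le> l1^2" for y
  proof -
    have "A y \<le> l1^2 * (cos y)^2 + l1^2 * (sin y)^2"
      unfolding A_def using l2sq by (intro add_left_mono mult_right_mono) auto
    also have "\<dots> = l1^2" by (metis distrib_left mult.right_neutral sin_cos_squared_add2)
    finally show ?thesis .
  qed
  have l1sq: "l1^2 > 0" using l by auto
  have Qpos: "l1^2 - K * A y > 0" for y
  proof (cases "K \<ge> 0")
    case True
    have "K * A y \<le> K * l1^2" using A1 True by (intro mult_left_mono) auto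
    moreover have "K * l1^2 < l1^2" using K l1sq by simp
    ultimately show ?thesis by linarith
  next
    case False
    have "K * A y \<le> 0" using A0 False by (simp add: mult_nonpos_nonneg)
    then show ?thesis using l1sq by linarith
  qed
  have Fpos: "F y > 0" for y unfolding F_def using Qpos by simp
  have Fle: "F y \<le> 2 * l1" for y
  proof -
    have "l1^2 - K * A y \<le> l1^2 + l1^2"
    proof -
      have "- K * A y \<le> 1 * l1^2" using K A0 A1 by (intro mult_mono) auto
      then show ?thesis by simp
    qed
    also have "\<dots> \<le> (2*l1)^2" by (simp add: power_mult_distrib)
    finally have "sqrt (l1^2 - K * A y) \<le> sqrt ((2*l1)^2)" by (rule real_sqrt_le_mono)
    moreover have "sqrt ((2*l1)^2) = 2*l1" using l by (subst real_sqrt_abs) simp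
    ultimately show ?thesis unfolding F_def by linarith
  qed
  have Feven: "F (-y) = F y" for y by (simp add: F_def A_def)
  have Fper: "F (y + pi) = F y" for y by (simp add: F_def A_def sin_add cos_add)
  have Fcont: "isCont F y" for y unfolding F_def A_def by (intro continuous_intros)
  have bd: "(b has_real_derivative F (b v)) (at v)" for v using b_ode[of v] by (simp add: F_def A_def)
  have xd: "(x3 has_real_derivative (l1*l2*K) / (l1 + F (b v))) (at v)" for v
    using x3_ode[of v] by (simp add: F_def A_def)
  obtain G0 where G0: "\<And>x. (G0 has_vector_derivative (1 / F x)) (at x)"
    using einterval_antiderivative[of "-\<infinity>" "\<infinity>" "\<lambda>y. 1 / F y"] Fcont Fpos
    by (force intro!: continuous_intros simp: less_imp_neq[symmetric])
  define G where "G y = G0 y - G0 0" for y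
  have Gd: "(G has_real_derivative (1 / F y)) (at y)" for y
    unfolding G_def using G0[of y]
    by (auto intro!: derivative_eq_intros simp: has_real_derivative_iff_has_vector_derivative)
  have G0': "G 0 = 0" by (simp add: G_def)
  have Gmono: "G x < G y" if "x < y" for x y
    using DERIV_pos_imp_increasing[OF that] Gd Fpos by (meson zero_less_divide_1_iff)
  have Ginj: "G x = G y \<Longrightarrow> x = y" for x y
    by (metis Gmono linorder_neqE_linordered_idom order_less_irrefl)
  have Gb: "G (b v) = v" for v
  proof -
    have "(\<lambda>v. G (b v) - v) v = (\<lambda>v. G (b v) - v) 0"
    proof (rule const_of_deriv0[of "\<lambda>v. G (b v) - v"])
      fix v
      show "((\<lambda>v. G (b v) - v) has_real_derivative 0) (at v)"
        using DERIV_chain2[OF Gd bd, of v] Fpos[of "b v"]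
        by (auto intro!: derivative_eq_intros)
    qed
    then show ?thesis using b0 G0' by simp
  qed
  have Godd: "G (-y) = - G y" for y
  proof -
    have "(\<lambda>y. G (-y) + G y) y = (\<lambda>y. G (-y) + G y) 0"
    proof (rule const_of_deriv0[of "\<lambda>y. G (-y) + G y"])
      fix v
      show "((\<lambda>y. G (-y) + G y) has_real_derivative 0) (at v)"
      proof -
        have d1: "((\<lambda>y. G (-y)) has_real_derivative (1 / F (-v)) * (-1)) (at v)"
          by (rule DERIV_chain2[OF Gd]) (auto intro!: derivative_eq_intros)
        show ?thesis using DERIV_add[OF d1 Gd[of v]] Feven[of v] by simp
      qed
    qed
    then show ?thesis using G0' by simp
  qed
  have Gper: "G (y + pi) = G y + G pi" for y
  proof -
    have "(\<lambda>y. G (y + pi) - G y) y = (\<lambda>y. G (y + pi) - G y) 0"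
    proof (rule const_of_deriv0[of "\<lambda>y. G (y + pi) - G y"])
      fix v
      show "((\<lambda>y. G (y + pi) - G y) has_real_derivative 0) (at v)"
      proof -
        have d1: "((\<lambda>y. G (y + pi)) has_real_derivative (1 / F (v + pi)) * 1) (at v)"
          by (rule DERIV_chain2[OF Gd]) (auto intro!: derivative_eq_intros)
        show ?thesis using DERIV_diff[OF d1 Gd[of v]] Fper[of v] by simp
      qed
    qed
    then show ?thesis using G0' by simp
  qed
  have GpiW: "G pi = W" using Gb[of W] W by simp
  have bodd: "b (-v) = - b v" for v
    by (rule Ginj) (simp add: Gb Godd)
  have bper: "b (v + W) = b v + pi" for v
    by (rule Ginj) (simp add: Gb Gper GpiW)
  have x3odd: "x3 (-v) = - x3 v" for v
  proof -
    have "(\<lambda>y. x3 (-y) + x3 y) v = (\<lambda>y. x3 (-y) + x3 y) 0"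
    proof (rule const_of_deriv0[of "\<lambda>y. x3 (-y) + x3 y"])
      fix v
      show "((\<lambda>y. x3 (-y) + x3 y) has_real_derivative 0) (at v)"
      proof -
        have d1: "((\<lambda>y. x3 (-y)) has_real_derivative ((l1*l2*K) / (l1 + F (b (-v)))) * (-1)) (at v)"
          by (rule DERIV_chain2[OF xd]) (auto intro!: derivative_eq_intros)
        show ?thesis using DERIV_add[OF d1 xd[of v]] Feven[of "b v"] bodd[of v] by simp
      qed
    qed
    then show ?thesis using x30 by simp
  qed
  have x3per: "x3 (v + W) = x3 v + x3 W" for v
  proof -
    have "(\<lambda>y. x3 (y + W) - x3 y) v = (\<lambda>y. x3 (y + W) - x3 y) 0"
    proof (rule const_of_deriv0[of "\<lambda>y. x3 (y + W) - x3 y"])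
      fix v
      show "((\<lambda>y. x3 (y + W) - x3 y) has_real_derivative 0) (at v)"
      proof -
        have d1: "((\<lambda>y. x3 (y + W)) has_real_derivative ((l1*l2*K) / (l1 + F (b (v + W)))) * 1) (at v)"
          by (rule DERIV_chain2[OF xd]) (auto intro!: derivative_eq_intros)
        show ?thesis using DERIV_diff[OF d1 xd[of v]] Fper[of "b v"] bper[of v] by simp
      qed
    qed
    then show ?thesis using x30 by simp
  qed
  have bij: "bij x3"
  proof (cases "K > 0")
    case True
    show ?thesis
    proof (rule bij_of_deriv_ge[OF xd, of "l1*l2*K / (3*l1)"])
      show "0 < l1*l2*K / (3*l1)" using l True by auto
      fix v
      show "l1*l2*K / (3*l1) \<le> l1*l2*K / (l1 + F (b v))"
        using l True Fle[of "b v"] Fpos[of "b v"] by (intro divide_left_mono) auto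
    qed
  next
    case False
    then have Kn: "K < 0" using K by auto
    have "bij (\<lambda>v. - x3 v)"
    proof (rule bij_of_deriv_ge[of _ "\<lambda>v. - ((l1*l2*K) / (l1 + F (b v)))" "l1*l2*(-K) / (3*l1)"])
      show "((\<lambda>v. - x3 v) has_real_derivative - ((l1*l2*K) / (l1 + F (b v)))) (at v)" for v
        using xd[of v] by (auto intro!: derivative_eq_intros)
      show "0 < l1*l2*(-K) / (3*l1)" using l Kn by (auto simp: mult_pos_neg)
      fix v
      have "l1*l2*(-K) / (3*l1) \<le> l1*l2*(-K) / (l1 + F (b v))"
        using l Kn Fle[of "b v"] Fpos[of "b v"] by (intro divide_left_mono) (auto simp: mult_nonneg_nonpos)
      then show "l1*l2*(-K) / (3*l1) \<le> - ((l1*l2*K) / (l1 + F (b v)))" by simp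
    qed
    then have "bij (uminus \<circ> (\<lambda>v. - x3 v))" using bij_uminus bij_comp by blast
    then show ?thesis by (simp add: comp_def)
  qed
  show ?thesis using bij x3odd x3per by blast
qed

end
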